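(* Let $V$ be the set of integer points $(x,y,z)\in\mathbb{Z}^3$ such that none of $x\pm y,\ y\pm z,\ z\pm x$ is congruent to $0\pmod 4$, let $G$ be the graph on $V$ with two vertices adjacent exactly when their Euclidean distance is $\sqrt2$, let $O=(0,1,2)$, and let $\operatorname{dis}(P)$ be the graph distance in $G$ from $O$ to $P$. Let $\mathcal U=\{(x,y,z): x\ge y\ge z\ge 0\}$. For integers $n$ define $S(n)=\#\{P\in V:\operatorname{dis}(P)=n\}$, $\bar S(n)=\#\{P=(x,y,z)\in V:\operatorname{dis}(P)=n,\ xyz=0\}$, $S_2(n)=\#\{P\in V\cap\mathcal U:\operatorname{dis}(P)=n\}$, $\bar S_1(n)=\#\{P=(x,y,z)\in V\cap\mathcal U:\operatorname{dis}(P)=n,\ xyz=0\}$ (all equal to $0$ for $n<0$). Then there are finitely many constants $a_j,b_j,c_j$ (indexed by integers $j$) such that for all $n$, $$\bar S(n)=\sum_j a_j\,\bar S_1(n+j),\qquad S(n)=\sum_j b_j\,\bar S_1(n+j)+\sum_j c_j\,S_2(n+j).$$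
   Context: $G$ is the sodalite network: the edge-skeleton of the uniform tiling of 3-space by truncated octahedra, scaled by a factor 4; $\operatorname{dis}$ is called the height. *)

theory Defs
  imports Complex_Main
begin

type_synonym pt = "int \<times> int \<times> int"

definition sodV :: "pt set" where
  "sodV = {(x,y,z). \<not> (4 dvd (x+y)) \<and> \<not> (4 dvd (x-y)) \<and> \<not> (4 dvd (y+z)) \<and>
                    \<not> (4 dvd (y-z)) \<and> \<not> (4 dvd (z+x)) \<and> \<not> (4 dvd (z-x))}"

definition sod_adj :: "pt \<Rightarrow> pt \<Rightarrow> bool" where
  "sod_adj P Q = (P \<in> sodV \<and> Q \<in> sodV \<and>
     (case P of (x1,y1,z1) \<Rightarrow> case Q of (x2,y2,z2) \<Rightarrow>
        (x1-x2)^2 + (y1-y2)^2 + (z1-z2)^2 = (2::int)))"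

definition sodO :: pt where "sodO = (0,1,2)"

inductive walk :: "nat \<Rightarrow> pt \<Rightarrow> bool" where
  walk0: "sodO \<in> sodV \<Longrightarrow> walk 0 sodO"
| walkS: "walk n P \<Longrightarrow> sod_adj P Q \<Longrightarrow> walk (Suc n) Q"

definition dis_eq :: "pt \<Rightarrow> int \<Rightarrow> bool" where
  "dis_eq P n = (0 \<le> n \<and> walk (nat n) P \<and> (\<forall>m < nat n. \<not> walk m P))"

definition sodU :: "pt set" where
  "sodU = {(x,y,z). x \<ge> y \<and> y \<ge> z \<and> z \<ge> 0}"

definition S :: "int \<Rightarrow> nat" where
  "S n = card {P \<in> sodV. dis_eq P n}"

definition Sbar :: "int \<Rightarrow> nat" where
  "Sbar n = card {P \<in> sodV. dis_eq P n \<and> fst P * fst (snd P) * snd (snd P) = 0}"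

definition S2 :: "int \<Rightarrow> nat" where
  "S2 n = card {P \<in> sodV \<inter> sodU. dis_eq P n}"

definition Sbar1 :: "int \<Rightarrow> nat" where
  "Sbar1 n = card {P \<in> sodV \<inter> sodU. dis_eq P n \<and> fst P * fst (snd P) * snd (snd P) = 0}"

end

theory Submission
  imports Defs
begin


definition ee :: "int \<Rightarrow> int \<Rightarrow> int" where
  "ee x y = (if even y then 0 else if (y - x) mod 4 = 1 then -1 else 1)"
fun FF :: "pt \<Rightarrow> int" where "FF (x,y,z) = 2*x + y + ee x y"
type_synonym sym = "nat \<times> int \<times> int \<times> int"
fun act :: "sym \<Rightarrow> pt \<Rightarrow> pt" where
 "act (p,a,b,c) (x,y,z) = (if p=0 then (a*x,b*y,c*z) else if p=1 then (a*x,b*z,c*y)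
    else if p=2 then (a*y,b*x,c*z) else if p=3 then (a*y,b*z,c*x)
    else if p=4 then (a*z,b*x,c*y) else (a*z,b*y,c*x))"
fun ginv :: "sym \<Rightarrow> sym" where
 "ginv (p,a,b,c) = (if p=0 then (0,a,b,c) else if p=1 then (1,a,c,b) else if p=2 then (2,b,a,c)
    else if p=3 then (4,c,a,b) else if p=4 then (3,b,c,a) else (5,c,b,a))"
fun ss :: "sym \<Rightarrow> int" where
 "ss (p,a,b,c) = (if p=0 then 0 else if p=1 then -c else if p=2 then -b else if p=3 then -2*c
    else if p=4 then -(b+c) else -(2*c+b))"
definition gl :: "sym list" where
 "gl = [(p,a,b,c). p <- [0..<6], a <- [-1,1], b <- [-1,1], c <- [-1,1]]"
definition Gs :: "sym set" where "Gs = set gl"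

lemma dvdp: "(4::int) dvd (x+y) \<longleftrightarrow> 4 dvd (x mod 4 + y mod 4)"
  by (simp add: dvd_eq_mod_eq_0 mod_add_eq)
lemma dvdm: "(4::int) dvd (x-y) \<longleftrightarrow> 4 dvd (x mod 4 - y mod 4)"
  by (simp add: dvd_eq_mod_eq_0 mod_diff_eq)
lemma V_res: "(x,y,z) \<in> sodV \<longleftrightarrow> (x mod 4, y mod 4, z mod 4) \<in> sodV"
  unfolding sodV_def by (simp add: dvdp[of x] dvdp[of y] dvdp[of z] dvdm[of x] dvdm[of y] dvdm[of z])
lemma even4: "even (y::int) \<longleftrightarrow> even (y mod 4)"
  by (metis dvd_mod_iff even_numeral)
lemma ee_res: "ee x y = ee (x mod 4) (y mod 4)"
  unfolding ee_def by (simp add: even4[of y] mod_diff_eq)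
lemma shift_res: "(x::int) mod 4 = r \<Longrightarrow> (x + a) mod 4 = (r + a) mod 4"
  by (metis mod_add_left_eq)


lemma Gs_cases:
  assumes "g \<in> Gs"
  shows "\<exists>p a b c. g = (p,a,b,c) \<and> p < 6 \<and> (a = 1 \<or> a = -1) \<and> (b = 1 \<or> b = -1) \<and> (c = 1 \<or> c = -1)"
  using assms unfolding Gs_def gl_def by auto

lemma sgn_cases: "(a::int) = 1 \<or> a = -1 \<Longrightarrow> (\<And>x. 4 dvd (a*x) \<longleftrightarrow> 4 dvd x)" by auto

lemma dvd4_neg: "(4::int) dvd (- x) \<longleftrightarrow> 4 dvd x" by simp

lemma act_V: assumes "g \<in> Gs" "P \<in> sodV" shows "act g P \<in> sodV"
proof -
  obtain p a b c where g: "g = (p,a,b,c)" "p < 6" "a = 1 \<or> a = -1" "b = 1 \<or> b = -1" "c = 1 \<or> c = -1"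
    using Gs_cases[OF assms(1)] by blast
  obtain x y z where P: "P = (x,y,z)" by (cases P)
  have "p = 0 \<or> p = 1 \<or> p = 2 \<or> p = 3 \<or> p = 4 \<or> p = 5" using g(2) by auto
  then show ?thesis using assms(2) g(3-5) unfolding g(1) P sodV_def
    by (elim disjE) (simp_all, presburger+)
qed

lemma act_sq: assumes "g \<in> Gs"
  shows "(case act g P of (x1,y1,z1) \<Rightarrow> case act g Q of (x2,y2,z2) \<Rightarrow> (x1-x2)^2 + (y1-y2)^2 + (z1-z2)^2)
       = (case P of (x1,y1,z1) \<Rightarrow> case Q of (x2,y2,z2) \<Rightarrow> (x1-x2)^2 + (y1-y2)^2 + (z1-z2)^2)"
proof -
  obtain p a b c where g: "g = (p,a,b,c)" "p < 6" "a = 1 \<or> a = -1" "b = 1 \<or> b = -1" "c = 1 \<or> c = -1"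
    using Gs_cases[OF assms(1)] by blast
  obtain x y z where P: "P = (x,y,z)" by (cases P)
  obtain x' y' z' where Q: "Q = (x',y',z')" by (cases Q)
  have "p = 0 \<or> p = 1 \<or> p = 2 \<or> p = 3 \<or> p = 4 \<or> p = 5" using g(2) by auto
  then show ?thesis using g(3-5) unfolding g(1) P Q
    by (elim disjE) (auto simp: power2_eq_square algebra_simps)
qed

lemma act_adj: assumes "g \<in> Gs" "sod_adj P Q" shows "sod_adj (act g P) (act g Q)"
proof -
  have "act g P \<in> sodV" "act g Q \<in> sodV" using assms act_V unfolding sod_adj_def by auto
  moreover have "(case P of (x1,y1,z1) \<Rightarrow> case Q of (x2,y2,z2) \<Rightarrow> (x1-x2)^2 + (y1-y2)^2 + (z1-z2)^2) = 2"
    using assms(2) unfolding sod_adj_def by (auto split: prod.splits)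
  ultimately show ?thesis using act_sq[OF assms(1), of P Q] unfolding sod_adj_def
    by (auto split: prod.splits, metis power2_commute)
qed

lemma ginv_Gs: "g \<in> Gs \<Longrightarrow> ginv g \<in> Gs"
  unfolding Gs_def gl_def by auto

lemma ginv_act: assumes "g \<in> Gs" shows "act (ginv g) (act g P) = P"
proof -
  obtain p a b c where g: "g = (p,a,b,c)" "p < 6" "a = 1 \<or> a = -1" "b = 1 \<or> b = -1" "c = 1 \<or> c = -1"
    using Gs_cases[OF assms(1)] by blast
  obtain x y z where P: "P = (x,y,z)" by (cases P)
  have "p = 0 \<or> p = 1 \<or> p = 2 \<or> p = 3 \<or> p = 4 \<or> p = 5" using g(2) by auto
  then show ?thesis using g(3-5) unfolding g(1) P
    by (elim disjE) auto
qed

lemma sq_unit: assumes "(a::int)^2 \<le> 2" shows "a = -1 \<or> a = 0 \<or> a = 1"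
proof (rule ccontr)
  assume "\<not> ?thesis"
  then have "\<bar>a\<bar> \<ge> 2" by auto
  then have "\<bar>a\<bar>^2 \<ge> 2^2" by (rule power_mono) auto
  then show False using assms by simp
qed

lemma adj_diff: assumes "sod_adj (x1,y1,z1) (x2,y2,z2)"
  shows "\<exists>a b c. x2 = x1 + a \<and> y2 = y1 + b \<and> z2 = z1 + c \<and> a \<in> {-1,0,1} \<and> b \<in> {-1,0,1} \<and> c \<in> {-1,0,1}
     \<and> a^2 + b^2 + c^2 = 2"
proof -
  have e: "(x1-x2)^2 + (y1-y2)^2 + (z1-z2)^2 = 2" using assms unfolding sod_adj_def by simp
  have "(x2-x1)^2 + (y2-y1)^2 + (z2-z1)^2 = 2" using e by (simp add: power2_commute)
  moreover have "(x2-x1)^2 \<le> 2" "(y2-y1)^2 \<le> 2" "(z2-z1)^2 \<le> 2" using calculation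
    by (smt (verit) zero_le_power2)+
  then have "x2-x1 \<in> {-1,0,1}" "y2-y1 \<in> {-1,0,1}" "z2-z1 \<in> {-1,0,1}"
    using sq_unit by blast+
  ultimately show ?thesis
    apply (rule_tac x="x2-x1" in exI)
    apply (rule_tac x="y2-y1" in exI)
    apply (rule_tac x="z2-z1" in exI)
    by auto
qed

lemma F_lip0: assumes "(x,y,z) \<in> sodV" "(x+a,y+b,z+c) \<in> sodV" "a \<in> {-1,0,1}" "b \<in> {-1,0,1}" "c \<in> {-1,0,1}"
  "a^2+b^2+c^2 = (2::int)"
  shows "FF (x+a,y+b,z+c) \<le> FF (x,y,z) + 2"
  using assms unfolding sodV_def
  apply (simp only: FF.simps ee_def)
  apply (elim insertE emptyE)
  apply (simp_all)
  apply presburger+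
  done

lemma F_lip: assumes "sod_adj P Q" shows "FF Q \<le> FF P + 2"
proof -
  obtain x1 y1 z1 where P: "P = (x1,y1,z1)" by (cases P)
  obtain x2 y2 z2 where Q: "Q = (x2,y2,z2)" by (cases Q)
  have V: "P \<in> sodV" "Q \<in> sodV" using assms unfolding sod_adj_def by auto
  obtain a b c where abc: "x2 = x1 + a" "y2 = y1 + b" "z2 = z1 + c" "a \<in> {-1,0,1}" "b \<in> {-1,0,1}" "c \<in> {-1,0,1}"
     "a^2 + b^2 + c^2 = 2"
    using adj_diff assms unfolding P Q by blast
  show ?thesis using F_lip0[of x1 y1 z1 a b c] V abc unfolding P Q by simp
qed

lemma Gbase: "g \<in> Gs \<Longrightarrow> FF (act (ginv g) sodO) + 2 * ss g \<le> 0"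
  unfolding Gs_def gl_def sodO_def by (auto simp: ee_def)

lemma LB: "walk n R \<Longrightarrow> g \<in> Gs \<Longrightarrow> FF (act (ginv g) R) + 2 * ss g \<le> 2 * int n"
proof (induction n R arbitrary: g rule: walk.induct)
  case walk0
  then show ?case using Gbase by simp
next
  case (walkS n P Q)
  have "FF (act (ginv g) Q) \<le> FF (act (ginv g) P) + 2"
    by (rule F_lip, rule act_adj[OF ginv_Gs[OF walkS.prems] walkS.hyps(2)])
  then show ?case using walkS.IH[OF walkS.prems] by simp
qed




lemma r4: "(0::int) \<le> r \<Longrightarrow> r < 4 \<Longrightarrow> r = 0 \<or> r = 1 \<or> r = 2 \<or> r = 3" by arith

lemma res_classes: assumes "(x,y,z) \<in> sodV"
  shows "(x mod 4 = 0 \<and> y mod 4 = 1 \<and> z mod 4 = 2) \<or> (x mod 4 = 0 \<and> y mod 4 = 2 \<and> z mod 4 = 1) \<or> (x mod 4 = 0 \<and> y mod 4 = 2 \<and> z mod 4 = 3) \<or> (x mod 4 = 0 \<and> y mod 4 = 3 \<and> z mod 4 = 2) \<or> (x mod 4 = 1 \<and> y mod 4 = 0 \<and> z mod 4 = 2) \<or> (x mod 4 = 1 \<and> y mod 4 = 2 \<and> z mod 4 = 0) \<or> (x mod 4 = 2 \<and> y mod 4 = 0 \<and> z mod 4 = 1) \<or> (x mod 4 = 2 \<and> y mod 4 = 0 \<and> z mod 4 = 3) \<or> (x mod 4 = 2 \<and> y mod 4 = 3 \<and> z mod 4 = 0) \<or> (x mod 4 = 3 \<and> y mod 4 = 0 \<and>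 z mod 4 = 2) \<or> (x mod 4 = 3 \<and> y mod 4 = 2 \<and> z mod 4 = 0) \<or> (x mod 4 = 2 \<and> y mod 4 = 1 \<and> z mod 4 = 0)"
proof -
  have V: "(x mod 4, y mod 4, z mod 4) \<in> sodV" using assms V_res by blast
  have "x mod 4 = 0 \<or> x mod 4 = 1 \<or> x mod 4 = 2 \<or> x mod 4 = 3" by (rule r4) simp_all
  moreover have "y mod 4 = 0 \<or> y mod 4 = 1 \<or> y mod 4 = 2 \<or> y mod 4 = 3" by (rule r4) simp_all
  moreover have "z mod 4 = 0 \<or> z mod 4 = 1 \<or> z mod 4 = 2 \<or> z mod 4 = 3" by (rule r4) simp_all
  ultimately show ?thesis using V by (elim disjE) (simp_all add: sodV_def)
qed

lemma descent: assumes "(x,y,z) \<in> sodV" "x \<ge> y" "y \<ge> z" "z \<ge> 0" "(x,y,z) \<noteq> (2,1,0)"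
  shows "\<exists>a b c. (x+a,y+b,z+c) \<in> sodV \<and> x+a \<ge> y+b \<and> y+b \<ge> z+c \<and> z+c \<ge> 0 \<and>
     a^2+b^2+c^2 = (2::int) \<and> FF (x+a,y+b,z+c) = FF (x,y,z) - 2"
proof -
  have c1: "x mod 4 = 0 \<and> y mod 4 = 1 \<and> z mod 4 = 2 \<Longrightarrow> ?thesis"
  proof -
    assume h:  "x mod 4 = 0 \<and> y mod 4 = 1 \<and> z mod 4 = 2"
    have r: "(x + (-1)) mod 4 = 3" "(y + (-1)) mod 4 = 0" "(z + (0)) mod 4 = 2"
      using shift_res[of x 0 "(-1)"] shift_res[of y 1 "(-1)"] shift_res[of z 2 "(0)"] h by auto
    have V': "(x+(-1),y+(-1),z+(0)) \<in> sodV" using r V_res[of "x+(-1)" "y+(-1)" "z+(0)"] by (simp add: sodV_def)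
    have F': "FF (x+(-1),y+(-1),z+(0)) = FF (x,y,z) - 2"
      using r h ee_res[of "x+(-1)" "y+(-1)"] ee_res[of x y] by (simp add: ee_def)
    have O': "x+(-1) \<ge> y+(-1) \<and> y+(-1) \<ge> z+(0) \<and> z+(0) \<ge> 0" using h assms(2-4) assms(5)[simplified] by presburger
    show ?thesis
      apply (rule exI[of _ "(-1)::int"], rule exI[of _ "(-1)::int"], rule exI[of _ "(0)::int"])
      using V' F' O' by simp
  qed
  have c2: "x mod 4 = 0 \<and> y mod 4 = 2 \<and> z mod 4 = 1 \<Longrightarrow> ?thesis"
  proof -
    assume h:  "x mod 4 = 0 \<and> y mod 4 = 2 \<and> z mod 4 = 1"
    have r: "(x + (-1)) mod 4 = 3" "(y + (0)) mod 4 = 2" "(z + (-1)) mod 4 = 0"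
      using shift_res[of x 0 "(-1)"] shift_res[of y 2 "(0)"] shift_res[of z 1 "(-1)"] h by auto
    have V': "(x+(-1),y+(0),z+(-1)) \<in> sodV" using r V_res[of "x+(-1)" "y+(0)" "z+(-1)"] by (simp add: sodV_def)
    have F': "FF (x+(-1),y+(0),z+(-1)) = FF (x,y,z) - 2"
      using r h ee_res[of "x+(-1)" "y+(0)"] ee_res[of x y] by (simp add: ee_def)
    have O': "x+(-1) \<ge> y+(0) \<and> y+(0) \<ge> z+(-1) \<and> z+(-1) \<ge> 0" using h assms(2-4) assms(5)[simplified] by presburger
    show ?thesis
      apply (rule exI[of _ "(-1)::int"], rule exI[of _ "(0)::int"], rule exI[of _ "(-1)::int"])
      using V' F' O' by simp
  qed
  have c3: "x mod 4 = 0 \<and> y mod 4 = 2 \<and> z mod 4 = 3 \<Longrightarrow> ?thesis"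
  proof -
    assume h:  "x mod 4 = 0 \<and> y mod 4 = 2 \<and> z mod 4 = 3"
    have r: "(x + (-1)) mod 4 = 3" "(y + (0)) mod 4 = 2" "(z + (1)) mod 4 = 0"
      using shift_res[of x 0 "(-1)"] shift_res[of y 2 "(0)"] shift_res[of z 3 "(1)"] h by auto
    have V': "(x+(-1),y+(0),z+(1)) \<in> sodV" using r V_res[of "x+(-1)" "y+(0)" "z+(1)"] by (simp add: sodV_def)
    have F': "FF (x+(-1),y+(0),z+(1)) = FF (x,y,z) - 2"
      using r h ee_res[of "x+(-1)" "y+(0)"] ee_res[of x y] by (simp add: ee_def)
    have O': "x+(-1) \<ge> y+(0) \<and> y+(0) \<ge> z+(1) \<and> z+(1) \<ge> 0" using h assms(2-4) assms(5)[simplified] by presburger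
    show ?thesis
      apply (rule exI[of _ "(-1)::int"], rule exI[of _ "(0)::int"], rule exI[of _ "(1)::int"])
      using V' F' O' by simp
  qed
  have c4: "x mod 4 = 0 \<and> y mod 4 = 3 \<and> z mod 4 = 2 \<Longrightarrow> ?thesis"
  proof -
    assume h:  "x mod 4 = 0 \<and> y mod 4 = 3 \<and> z mod 4 = 2"
    have r: "(x + (0)) mod 4 = 0" "(y + (-1)) mod 4 = 2" "(z + (-1)) mod 4 = 1"
      using shift_res[of x 0 "(0)"] shift_res[of y 3 "(-1)"] shift_res[of z 2 "(-1)"] h by auto
    have V': "(x+(0),y+(-1),z+(-1)) \<in> sodV" using r V_res[of "x+(0)" "y+(-1)" "z+(-1)"] by (simp add: sodV_def)
    have F': "FF (x+(0),y+(-1),z+(-1)) = FF (x,y,z) - 2"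
      using r h ee_res[of "x+(0)" "y+(-1)"] ee_res[of x y] by (simp add: ee_def)
    have O': "x+(0) \<ge> y+(-1) \<and> y+(-1) \<ge> z+(-1) \<and> z+(-1) \<ge> 0" using h assms(2-4) assms(5)[simplified] by presburger
    show ?thesis
      apply (rule exI[of _ "(0)::int"], rule exI[of _ "(-1)::int"], rule exI[of _ "(-1)::int"])
      using V' F' O' by simp
  qed
  have c5: "x mod 4 = 1 \<and> y mod 4 = 0 \<and> z mod 4 = 2 \<Longrightarrow> ?thesis"
  proof -
    assume h:  "x mod 4 = 1 \<and> y mod 4 = 0 \<and> z mod 4 = 2"
    have r: "(x + (-1)) mod 4 = 0" "(y + (-1)) mod 4 = 3" "(z + (0)) mod 4 = 2"
      using shift_res[of x 1 "(-1)"] shift_res[of y 0 "(-1)"] shift_res[of z 2 "(0)"] h by auto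
    have V': "(x+(-1),y+(-1),z+(0)) \<in> sodV" using r V_res[of "x+(-1)" "y+(-1)" "z+(0)"] by (simp add: sodV_def)
    have F': "FF (x+(-1),y+(-1),z+(0)) = FF (x,y,z) - 2"
      using r h ee_res[of "x+(-1)" "y+(-1)"] ee_res[of x y] by (simp add: ee_def)
    have O': "x+(-1) \<ge> y+(-1) \<and> y+(-1) \<ge> z+(0) \<and> z+(0) \<ge> 0" using h assms(2-4) assms(5)[simplified] by presburger
    show ?thesis
      apply (rule exI[of _ "(-1)::int"], rule exI[of _ "(-1)::int"], rule exI[of _ "(0)::int"])
      using V' F' O' by simp
  qed
  have c6: "x mod 4 = 1 \<and> y mod 4 = 2 \<and> z mod 4 = 0 \<Longrightarrow> ?thesis"
  proof -
    assume h:  "x mod 4 = 1 \<and> y mod 4 = 2 \<and> z mod 4 = 0"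
    have r: "(x + (-1)) mod 4 = 0" "(y + (0)) mod 4 = 2" "(z + (1)) mod 4 = 1"
      using shift_res[of x 1 "(-1)"] shift_res[of y 2 "(0)"] shift_res[of z 0 "(1)"] h by auto
    have V': "(x+(-1),y+(0),z+(1)) \<in> sodV" using r V_res[of "x+(-1)" "y+(0)" "z+(1)"] by (simp add: sodV_def)
    have F': "FF (x+(-1),y+(0),z+(1)) = FF (x,y,z) - 2"
      using r h ee_res[of "x+(-1)" "y+(0)"] ee_res[of x y] by (simp add: ee_def)
    have O': "x+(-1) \<ge> y+(0) \<and> y+(0) \<ge> z+(1) \<and> z+(1) \<ge> 0" using h assms(2-4) assms(5)[simplified] by presburger
    show ?thesis
      apply (rule exI[of _ "(-1)::int"], rule exI[of _ "(0)::int"], rule exI[of _ "(1)::int"])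
      using V' F' O' by simp
  qed
  have c7: "x mod 4 = 2 \<and> y mod 4 = 0 \<and> z mod 4 = 1 \<Longrightarrow> ?thesis"
  proof -
    assume h:  "x mod 4 = 2 \<and> y mod 4 = 0 \<and> z mod 4 = 1"
    have r: "(x + (-1)) mod 4 = 1" "(y + (0)) mod 4 = 0" "(z + (1)) mod 4 = 2"
      using shift_res[of x 2 "(-1)"] shift_res[of y 0 "(0)"] shift_res[of z 1 "(1)"] h by auto
    have V': "(x+(-1),y+(0),z+(1)) \<in> sodV" using r V_res[of "x+(-1)" "y+(0)" "z+(1)"] by (simp add: sodV_def)
    have F': "FF (x+(-1),y+(0),z+(1)) = FF (x,y,z) - 2"
      using r h ee_res[of "x+(-1)" "y+(0)"] ee_res[of x y] by (simp add: ee_def)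
    have O': "x+(-1) \<ge> y+(0) \<and> y+(0) \<ge> z+(1) \<and> z+(1) \<ge> 0" using h assms(2-4) assms(5)[simplified] by presburger
    show ?thesis
      apply (rule exI[of _ "(-1)::int"], rule exI[of _ "(0)::int"], rule exI[of _ "(1)::int"])
      using V' F' O' by simp
  qed
  have c8: "x mod 4 = 2 \<and> y mod 4 = 0 \<and> z mod 4 = 3 \<Longrightarrow> ?thesis"
  proof -
    assume h:  "x mod 4 = 2 \<and> y mod 4 = 0 \<and> z mod 4 = 3"
    have r: "(x + (-1)) mod 4 = 1" "(y + (0)) mod 4 = 0" "(z + (-1)) mod 4 = 2"
      using shift_res[of x 2 "(-1)"] shift_res[of y 0 "(0)"] shift_res[of z 3 "(-1)"] h by auto
    have V': "(x+(-1),y+(0),z+(-1)) \<in> sodV" using r V_res[of "x+(-1)" "y+(0)" "z+(-1)"] by (simp add: sodV_def)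
    have F': "FF (x+(-1),y+(0),z+(-1)) = FF (x,y,z) - 2"
      using r h ee_res[of "x+(-1)" "y+(0)"] ee_res[of x y] by (simp add: ee_def)
    have O': "x+(-1) \<ge> y+(0) \<and> y+(0) \<ge> z+(-1) \<and> z+(-1) \<ge> 0" using h assms(2-4) assms(5)[simplified] by presburger
    show ?thesis
      apply (rule exI[of _ "(-1)::int"], rule exI[of _ "(0)::int"], rule exI[of _ "(-1)::int"])
      using V' F' O' by simp
  qed
  have c9: "x mod 4 = 2 \<and> y mod 4 = 3 \<and> z mod 4 = 0 \<Longrightarrow> ?thesis"
  proof -
    assume h:  "x mod 4 = 2 \<and> y mod 4 = 3 \<and> z mod 4 = 0"
    have r: "(x + (-1)) mod 4 = 1" "(y + (-1)) mod 4 = 2" "(z + (0)) mod 4 = 0"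
      using shift_res[of x 2 "(-1)"] shift_res[of y 3 "(-1)"] shift_res[of z 0 "(0)"] h by auto
    have V': "(x+(-1),y+(-1),z+(0)) \<in> sodV" using r V_res[of "x+(-1)" "y+(-1)" "z+(0)"] by (simp add: sodV_def)
    have F': "FF (x+(-1),y+(-1),z+(0)) = FF (x,y,z) - 2"
      using r h ee_res[of "x+(-1)" "y+(-1)"] ee_res[of x y] by (simp add: ee_def)
    have O': "x+(-1) \<ge> y+(-1) \<and> y+(-1) \<ge> z+(0) \<and> z+(0) \<ge> 0" using h assms(2-4) assms(5)[simplified] by presburger
    show ?thesis
      apply (rule exI[of _ "(-1)::int"], rule exI[of _ "(-1)::int"], rule exI[of _ "(0)::int"])
      using V' F' O' by simp
  qed
  have c10: "x mod 4 = 3 \<and> y mod 4 = 0 \<and> z mod 4 = 2 \<Longrightarrow> ?thesis"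
  proof -
    assume h:  "x mod 4 = 3 \<and> y mod 4 = 0 \<and> z mod 4 = 2"
    have r: "(x + (-1)) mod 4 = 2" "(y + (0)) mod 4 = 0" "(z + (-1)) mod 4 = 1"
      using shift_res[of x 3 "(-1)"] shift_res[of y 0 "(0)"] shift_res[of z 2 "(-1)"] h by auto
    have V': "(x+(-1),y+(0),z+(-1)) \<in> sodV" using r V_res[of "x+(-1)" "y+(0)" "z+(-1)"] by (simp add: sodV_def)
    have F': "FF (x+(-1),y+(0),z+(-1)) = FF (x,y,z) - 2"
      using r h ee_res[of "x+(-1)" "y+(0)"] ee_res[of x y] by (simp add: ee_def)
    have O': "x+(-1) \<ge> y+(0) \<and> y+(0) \<ge> z+(-1) \<and> z+(-1) \<ge> 0" using h assms(2-4) assms(5)[simplified] by presburger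
    show ?thesis
      apply (rule exI[of _ "(-1)::int"], rule exI[of _ "(0)::int"], rule exI[of _ "(-1)::int"])
      using V' F' O' by simp
  qed
  have c11: "x mod 4 = 3 \<and> y mod 4 = 2 \<and> z mod 4 = 0 \<Longrightarrow> ?thesis"
  proof -
    assume h:  "x mod 4 = 3 \<and> y mod 4 = 2 \<and> z mod 4 = 0"
    have r: "(x + (-1)) mod 4 = 2" "(y + (-1)) mod 4 = 1" "(z + (0)) mod 4 = 0"
      using shift_res[of x 3 "(-1)"] shift_res[of y 2 "(-1)"] shift_res[of z 0 "(0)"] h by auto
    have V': "(x+(-1),y+(-1),z+(0)) \<in> sodV" using r V_res[of "x+(-1)" "y+(-1)" "z+(0)"] by (simp add: sodV_def)
    have F': "FF (x+(-1),y+(-1),z+(0)) = FF (x,y,z) - 2"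
      using r h ee_res[of "x+(-1)" "y+(-1)"] ee_res[of x y] by (simp add: ee_def)
    have O': "x+(-1) \<ge> y+(-1) \<and> y+(-1) \<ge> z+(0) \<and> z+(0) \<ge> 0" using h assms(2-4) assms(5)[simplified] by presburger
    show ?thesis
      apply (rule exI[of _ "(-1)::int"], rule exI[of _ "(-1)::int"], rule exI[of _ "(0)::int"])
      using V' F' O' by simp
  qed
  have c12: "y \<noteq> x - 1 \<Longrightarrow> x mod 4 = 2 \<and> y mod 4 = 1 \<and> z mod 4 = 0 \<Longrightarrow> ?thesis"
  proof -
    assume h: "y \<noteq> x - 1" "x mod 4 = 2 \<and> y mod 4 = 1 \<and> z mod 4 = 0"
    have r: "(x + (-1)) mod 4 = 1" "(y + (1)) mod 4 = 2" "(z + (0)) mod 4 = 0"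
      using shift_res[of x 2 "(-1)"] shift_res[of y 1 "(1)"] shift_res[of z 0 "(0)"] h by auto
    have V': "(x+(-1),y+(1),z+(0)) \<in> sodV" using r V_res[of "x+(-1)" "y+(1)" "z+(0)"] by (simp add: sodV_def)
    have F': "FF (x+(-1),y+(1),z+(0)) = FF (x,y,z) - 2"
      using r h ee_res[of "x+(-1)" "y+(1)"] ee_res[of x y] by (simp add: ee_def)
    have O': "x+(-1) \<ge> y+(1) \<and> y+(1) \<ge> z+(0) \<and> z+(0) \<ge> 0" using h assms(2-4) assms(5)[simplified] by presburger
    show ?thesis
      apply (rule exI[of _ "(-1)::int"], rule exI[of _ "(1)::int"], rule exI[of _ "(0)::int"])
      using V' F' O' by simp
  qed
  have c13: "y = x - 1 \<Longrightarrow> z \<noteq> 0 \<Longrightarrow> x mod 4 = 2 \<and> y mod 4 = 1 \<and> z mod 4 = 0 \<Longrightarrow> ?thesis"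
  proof -
    assume h: "y = x - 1" "z \<noteq> 0" "x mod 4 = 2 \<and> y mod 4 = 1 \<and> z mod 4 = 0"
    have r: "(x + (0)) mod 4 = 2" "(y + (-1)) mod 4 = 0" "(z + (-1)) mod 4 = 3"
      using shift_res[of x 2 "(0)"] shift_res[of y 1 "(-1)"] shift_res[of z 0 "(-1)"] h by auto
    have V': "(x+(0),y+(-1),z+(-1)) \<in> sodV" using r V_res[of "x+(0)" "y+(-1)" "z+(-1)"] by (simp add: sodV_def)
    have F': "FF (x+(0),y+(-1),z+(-1)) = FF (x,y,z) - 2"
      using r h ee_res[of "x+(0)" "y+(-1)"] ee_res[of x y] by (simp add: ee_def)
    have O': "x+(0) \<ge> y+(-1) \<and> y+(-1) \<ge> z+(-1) \<and> z+(-1) \<ge> 0" using h assms(2-4) assms(5)[simplified] by presburger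
    show ?thesis
      apply (rule exI[of _ "(0)::int"], rule exI[of _ "(-1)::int"], rule exI[of _ "(-1)::int"])
      using V' F' O' by simp
  qed
  have c14: "y = x - 1 \<Longrightarrow> z = 0 \<Longrightarrow> x mod 4 = 2 \<and> y mod 4 = 1 \<and> z mod 4 = 0 \<Longrightarrow> ?thesis"
  proof -
    assume h: "y = x - 1" "z = 0" "x mod 4 = 2 \<and> y mod 4 = 1 \<and> z mod 4 = 0"
    have r: "(x + (0)) mod 4 = 2" "(y + (-1)) mod 4 = 0" "(z + (1)) mod 4 = 1"
      using shift_res[of x 2 "(0)"] shift_res[of y 1 "(-1)"] shift_res[of z 0 "(1)"] h by auto
    have V': "(x+(0),y+(-1),z+(1)) \<in> sodV" using r V_res[of "x+(0)" "y+(-1)" "z+(1)"] by (simp add: sodV_def)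
    have F': "FF (x+(0),y+(-1),z+(1)) = FF (x,y,z) - 2"
      using r h ee_res[of "x+(0)" "y+(-1)"] ee_res[of x y] by (simp add: ee_def)
    have O': "x+(0) \<ge> y+(-1) \<and> y+(-1) \<ge> z+(1) \<and> z+(1) \<ge> 0" using h assms(2-4) assms(5)[simplified] by presburger
    show ?thesis
      apply (rule exI[of _ "(0)::int"], rule exI[of _ "(-1)::int"], rule exI[of _ "(1)::int"])
      using V' F' O' by simp
  qed
  have c15: "x mod 4 = 2 \<and> y mod 4 = 1 \<and> z mod 4 = 0 \<Longrightarrow> ?thesis"
  proof -
    assume h: "x mod 4 = 2 \<and> y mod 4 = 1 \<and> z mod 4 = 0"
    show ?thesis
    proof (cases "y = x - 1")
      case False
      show ?thesis by (rule c12[OF False h])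
    next
      case T: True
      show ?thesis
      proof (cases "z = 0")
        case True
        show ?thesis by (rule c14[OF T True h])
      next
        case False
        show ?thesis by (rule c13[OF T False h])
      qed
    qed
  qed
  from res_classes[OF assms(1)] show ?thesis
    apply (elim disjE)
    apply (erule c1)
    apply (erule c2)
    apply (erule c3)
    apply (erule c4)
    apply (erule c5)
    apply (erule c6)
    apply (erule c7)
    apply (erule c8)
    apply (erule c9)
    apply (erule c10)
    apply (erule c11)
    apply (erule c15)
    done
qed

lemma w_0: "walk 0 (0,1,2)"
  using walk0[unfolded sodO_def] by (simp add: sodV_def)

lemma w_1: "walk 1 (-1,0,2)"
  using walkS[OF w_0, of "(-1,0,2)"] by (simp add: sod_adj_def sodV_def eval_nat_numeral)

lemma w_2: "walk 1 (0,2,1)"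
  using walkS[OF w_0, of "(0,2,1)"] by (simp add: sod_adj_def sodV_def eval_nat_numeral)

lemma w_3: "walk 1 (1,0,2)"
  using walkS[OF w_0, of "(1,0,2)"] by (simp add: sod_adj_def sodV_def eval_nat_numeral)

lemma w_4: "walk 2 (2,0,1)"
  using walkS[OF w_3, of "(2,0,1)"] by (simp add: sod_adj_def sodV_def eval_nat_numeral)

lemma w_5: "walk 2 (-2,0,1)"
  using walkS[OF w_1, of "(-2,0,1)"] by (simp add: sod_adj_def sodV_def eval_nat_numeral)

lemma w_6: "walk 2 (0,-1,2)"
  using walkS[OF w_1, of "(0,-1,2)"] by (simp add: sod_adj_def sodV_def eval_nat_numeral)

lemma w_7: "walk 2 (1,2,0)"
  using walkS[OF w_2, of "(1,2,0)"] by (simp add: sod_adj_def sodV_def eval_nat_numeral)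

lemma w_8: "walk 2 (-1,2,0)"
  using walkS[OF w_2, of "(-1,2,0)"] by (simp add: sod_adj_def sodV_def eval_nat_numeral)

lemma w_9: "walk 3 (0,-2,1)"
  using walkS[OF w_6, of "(0,-2,1)"] by (simp add: sod_adj_def sodV_def eval_nat_numeral)

lemma w_10: "walk 3 (2,1,0)"
  using walkS[OF w_7, of "(2,1,0)"] by (simp add: sod_adj_def sodV_def eval_nat_numeral)

lemma w_11: "walk 3 (0,2,-1)"
  using walkS[OF w_8, of "(0,2,-1)"] by (simp add: sod_adj_def sodV_def eval_nat_numeral)

lemma w_12: "walk 3 (-2,1,0)"
  using walkS[OF w_5, of "(-2,1,0)"] by (simp add: sod_adj_def sodV_def eval_nat_numeral)

lemma w_13: "walk 3 (2,-1,0)"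
  using walkS[OF w_4, of "(2,-1,0)"] by (simp add: sod_adj_def sodV_def eval_nat_numeral)

lemma w_14: "walk 3 (-2,-1,0)"
  using walkS[OF w_5, of "(-2,-1,0)"] by (simp add: sod_adj_def sodV_def eval_nat_numeral)

lemma w_15: "walk 4 (2,0,-1)"
  using walkS[OF w_10, of "(2,0,-1)"] by (simp add: sod_adj_def sodV_def eval_nat_numeral)

lemma w_16: "walk 4 (1,-2,0)"
  using walkS[OF w_9, of "(1,-2,0)"] by (simp add: sod_adj_def sodV_def eval_nat_numeral)

lemma w_17: "walk 4 (-2,0,-1)"
  using walkS[OF w_14, of "(-2,0,-1)"] by (simp add: sod_adj_def sodV_def eval_nat_numeral)

lemma w_18: "walk 4 (-1,-2,0)"
  using walkS[OF w_14, of "(-1,-2,0)"] by (simp add: sod_adj_def sodV_def eval_nat_numeral)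

lemma w_19: "walk 4 (0,1,-2)"
  using walkS[OF w_11, of "(0,1,-2)"] by (simp add: sod_adj_def sodV_def eval_nat_numeral)

lemma w_20: "walk 5 (0,-2,-1)"
  using walkS[OF w_18, of "(0,-2,-1)"] by (simp add: sod_adj_def sodV_def eval_nat_numeral)

lemma w_21: "walk 5 (1,0,-2)"
  using walkS[OF w_19, of "(1,0,-2)"] by (simp add: sod_adj_def sodV_def eval_nat_numeral)

lemma w_22: "walk 5 (-1,0,-2)"
  using walkS[OF w_17, of "(-1,0,-2)"] by (simp add: sod_adj_def sodV_def eval_nat_numeral)

lemma w_23: "walk 6 (0,-1,-2)"
  using walkS[OF w_22, of "(0,-1,-2)"] by (simp add: sod_adj_def sodV_def eval_nat_numeral)

lemma base_walk: "g \<in> Gs \<Longrightarrow> walk (nat (3 + ss g)) (act g (2,1,0))"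
  unfolding Gs_def gl_def by (auto simp: w_20 w_20 w_23 w_23 w_9 w_9 w_10 w_10 w_11 w_11 w_1[unfolded One_nat_def] w_1 w_2[unfolded One_nat_def] w_2 w_21 w_21 w_15 w_15 w_4 w_4 w_12 w_12 w_0 w_0 w_16 w_16 w_13 w_13 w_5 w_5 w_17 w_17 w_22 w_22 w_18 w_18 w_14 w_14 w_19 w_19 w_6 w_6 w_7 w_7 w_8 w_8 w_3[unfolded One_nat_def] w_3)




lemma ss_ge: "g \<in> Gs \<Longrightarrow> ss g \<ge> -3" unfolding Gs_def gl_def by auto

lemma FF_even: "even (FF P)"
  by (cases P) (auto simp: ee_def)

lemma FF_ge0: "x \<ge> y \<Longrightarrow> y \<ge> 0 \<Longrightarrow> FF (x,y,z) \<ge> 0"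
  by (cases "y = 0") (auto simp: ee_def)

lemma FF_210: "FF (2,1,0) = 6" by (simp add: ee_def)

lemma suc_helper: assumes "(q::int) \<ge> 6" "s \<ge> -3" shows "Suc (nat (q div 2 + s)) = nat ((q + 2) div 2 + s)"
proof -
  have a: "(q + 2) div 2 = q div 2 + 1" by simp
  have "q div 2 \<ge> 3" using assms(1) by simp
  then have "q div 2 + s \<ge> 0" using assms(2) by simp
  then show ?thesis unfolding a using Suc_nat_eq_nat_zadd1 by (simp add: add.commute add.left_commute)
qed

lemma UBm: "\<forall>x y z. (x,y,z) \<in> sodV \<and> x \<ge> y \<and> y \<ge> z \<and> z \<ge> 0 \<and> nat (FF (x,y,z) + 1) = m \<longrightarrow>
   FF (x,y,z) \<ge> 6 \<and> (\<forall>g\<in>Gs. walk (nat (FF (x,y,z) div 2 + ss g)) (act g (x,y,z)))"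
proof (induction m rule: less_induct)
  case (less m)
  show ?case
  proof (intro allI impI)
    fix x y z
    assume H: "(x,y,z) \<in> sodV \<and> x \<ge> y \<and> y \<ge> z \<and> z \<ge> 0 \<and> nat (FF (x,y,z) + 1) = m"
    show "FF (x,y,z) \<ge> 6 \<and> (\<forall>g\<in>Gs. walk (nat (FF (x,y,z) div 2 + ss g)) (act g (x,y,z)))"
    proof (cases "(x,y,z) = (2,1,0)")
      case True
      then show ?thesis using base_walk FF_210 by simp
    next
      case False
      obtain a b c where Q: "(x+a,y+b,z+c) \<in> sodV" "x+a \<ge> y+b" "y+b \<ge> z+c" "z+c \<ge> 0"
        "a^2+b^2+c^2 = (2::int)" "FF (x+a,y+b,z+c) = FF (x,y,z) - 2"
        using descent[of x y z] H False by blast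
      have g0: "FF (x+a,y+b,z+c) \<ge> 0" using FF_ge0[of "y+b" "x+a" "z+c"] Q(2,3,4) by simp
      have mm: "m = nat (FF (x,y,z) + 1)" using H by simp
      have lt: "nat (FF (x+a,y+b,z+c) + 1) < m" unfolding mm
        using Q(6) g0 by (simp del: FF.simps add: nat_less_eq_zless)
      have IH: "FF (x+a,y+b,z+c) \<ge> 6 \<and> (\<forall>g\<in>Gs. walk (nat (FF (x+a,y+b,z+c) div 2 + ss g)) (act g (x+a,y+b,z+c)))"
        using less.IH[OF lt] Q by blast
      have adj: "sod_adj (x+a,y+b,z+c) (x,y,z)"
        unfolding sod_adj_def using Q(1,5) H by simp
      have "walk (nat (FF (x,y,z) div 2 + ss g)) (act g (x,y,z))" if g: "g \<in> Gs" for g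
      proof -
        have w: "walk (Suc (nat (FF (x+a,y+b,z+c) div 2 + ss g))) (act g (x,y,z))"
          using walkS[OF _ act_adj[OF g adj]] IH g by blast
        have "Suc (nat (FF (x+a,y+b,z+c) div 2 + ss g)) = nat (FF (x,y,z) div 2 + ss g)"
          using suc_helper[of "FF (x+a,y+b,z+c)" "ss g"] IH ss_ge[OF g] Q(6) by (simp del: FF.simps)
        then show ?thesis using w by simp
      qed
      then show ?thesis using IH Q(6) by simp
    qed
  qed
qed

lemma UB: assumes "(x,y,z) \<in> sodV" "x \<ge> y" "y \<ge> z" "z \<ge> 0" "g \<in> Gs"
  shows "walk (nat (FF (x,y,z) div 2 + ss g)) (act g (x,y,z))" "FF (x,y,z) \<ge> 6"
  using UBm[of "nat (FF (x,y,z) + 1)"] assms by blast+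

lemma dis_char: assumes "(x,y,z) \<in> sodV" "x \<ge> y" "y \<ge> z" "z \<ge> 0" "g \<in> Gs"
  shows "dis_eq (act g (x,y,z)) n \<longleftrightarrow> 2*n = FF (x,y,z) + 2 * ss g"
proof -
  define k where "k = FF (x,y,z) div 2 + ss g"
  have k2: "2*k = FF (x,y,z) + 2 * ss g" unfolding k_def using FF_even[of "(x,y,z)"] by simp
  have k0: "k \<ge> 0" unfolding k_def using UB(2)[OF assms] ss_ge[OF assms(5)] by simp
  have W: "walk (nat k) (act g (x,y,z))" unfolding k_def by (rule UB(1)[OF assms])
  have L: "k \<le> int m" if "walk m (act g (x,y,z))" for m
    using LB[OF that assms(5)] ginv_act[OF assms(5)] k2 by simp
  show ?thesis
  proof
    assume D: "dis_eq (act g (x,y,z)) n"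
    then have n0: "0 \<le> n" and Wn: "walk (nat n) (act g (x,y,z))" and M: "\<forall>m < nat n. \<not> walk m (act g (x,y,z))"
      unfolding dis_eq_def by auto
    have "k \<le> n" using L[OF Wn] n0 by simp
    moreover have "\<not> nat k < nat n" using M W by blast
    ultimately show "2*n = FF (x,y,z) + 2 * ss g" using k2 k0 n0 by linarith
  next
    assume "2*n = FF (x,y,z) + 2 * ss g"
    then have nk: "n = k" using k2 by linarith
    have NW: "\<not> walk m (act g (x,y,z))" if "m < nat k" for m
      using that L[of m] by (auto simp: zless_nat_eq_int_zless)
    show "dis_eq (act g (x,y,z)) n"
      unfolding dis_eq_def nk using k0 W NW by auto
  qed
qed




definition AA :: "pt set" where "AA = sodV \<inter> sodU"
definition sg1 :: "int \<Rightarrow> int" where "sg1 t = (if t < 0 then -1 else 1)"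
definition prd :: "pt \<Rightarrow> int" where "prd R = fst R * fst (snd R) * snd (snd R)"

fun pof :: "pt \<Rightarrow> pt" where
 "pof (u,v,w) = (max \<bar>u\<bar> (max \<bar>v\<bar> \<bar>w\<bar>),
     \<bar>u\<bar> + \<bar>v\<bar> + \<bar>w\<bar> - max \<bar>u\<bar> (max \<bar>v\<bar> \<bar>w\<bar>) - min \<bar>u\<bar> (min \<bar>v\<bar> \<bar>w\<bar>),
     min \<bar>u\<bar> (min \<bar>v\<bar> \<bar>w\<bar>))"

fun gof :: "pt \<Rightarrow> sym" where
 "gof (u,v,w) = ((if \<bar>u\<bar> > \<bar>v\<bar> \<and> \<bar>v\<bar> > \<bar>w\<bar> then 0 else if \<bar>u\<bar> > \<bar>w\<bar> \<and> \<bar>w\<bar> > \<bar>v\<bar> then 1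
     else if \<bar>v\<bar> > \<bar>u\<bar> \<and> \<bar>u\<bar> > \<bar>w\<bar> then 2 else if \<bar>w\<bar> > \<bar>u\<bar> \<and> \<bar>u\<bar> > \<bar>v\<bar> then 3
     else if \<bar>v\<bar> > \<bar>w\<bar> \<and> \<bar>w\<bar> > \<bar>u\<bar> then 4 else 5), sg1 u, sg1 v, sg1 w)"

fun zs :: "sym \<Rightarrow> int" where
  "zs (p,a,b,c) = (if p = 0 \<or> p = 2 then c else if p = 1 \<or> p = 3 then b else a)"

lemma sgabs: "sg1 t * \<bar>t\<bar> = t" by (simp add: sg1_def)

lemma V_dist: assumes "(u,v,w) \<in> sodV" shows "\<bar>u\<bar> \<noteq> \<bar>v\<bar>" "\<bar>v\<bar> \<noteq> \<bar>w\<bar>" "\<bar>u\<bar> \<noteq> \<bar>w\<bar>"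
proof -
  have h: "\<bar>a\<bar> \<noteq> \<bar>b\<bar>" if "\<not> 4 dvd (a+b)" "\<not> 4 dvd (a-b)" for a b :: int
  proof
    assume "\<bar>a\<bar> = \<bar>b\<bar>"
    then have "a = b \<or> a = -b" by arith
    then show False using that by auto
  qed
  show "\<bar>u\<bar> \<noteq> \<bar>v\<bar>" "\<bar>v\<bar> \<noteq> \<bar>w\<bar>" "\<bar>u\<bar> \<noteq> \<bar>w\<bar>"
    using assms h[of u v] h[of v w] h[of w u] unfolding sodV_def by auto
qed

lemma gof_Gs: "gof R \<in> Gs"
  by (cases R) (auto simp: Gs_def gl_def sg1_def)

lemma K2: assumes "R \<in> sodV"
  shows "act (gof R) (pof R) = R \<and> (zs (gof R) = -1 \<longrightarrow> snd (snd (pof R)) \<noteq> 0)"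
proof -
  obtain u v w where R: "R = (u,v,w)" by (cases R)
  have d: "\<bar>u\<bar> \<noteq> \<bar>v\<bar>" "\<bar>v\<bar> \<noteq> \<bar>w\<bar>" "\<bar>u\<bar> \<noteq> \<bar>w\<bar>" using V_dist assms R by auto
  have "(\<bar>u\<bar> > \<bar>v\<bar> \<and> \<bar>v\<bar> > \<bar>w\<bar>) \<or> (\<bar>u\<bar> > \<bar>w\<bar> \<and> \<bar>w\<bar> > \<bar>v\<bar>) \<or> (\<bar>v\<bar> > \<bar>u\<bar> \<and> \<bar>u\<bar> > \<bar>w\<bar>) \<or>
        (\<bar>w\<bar> > \<bar>u\<bar> \<and> \<bar>u\<bar> > \<bar>v\<bar>) \<or> (\<bar>v\<bar> > \<bar>w\<bar> \<and> \<bar>w\<bar> > \<bar>u\<bar>) \<or> (\<bar>w\<bar> > \<bar>v\<bar> \<and> \<bar>v\<bar> > \<bar>u\<bar>)"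
    using d by linarith
  then show ?thesis unfolding R
    by (elim disjE) (auto simp: sgabs max_def min_def sg1_def)
qed




lemma AA_strict: assumes "(x,y,z) \<in> AA" shows "x > y" "y > z" "z \<ge> 0"
  using assms V_dist[of x y z] unfolding AA_def sodU_def by auto

lemma unit_abs: "a = 1 \<or> a = -1 \<Longrightarrow> \<bar>a * (x::int)\<bar> = \<bar>x\<bar>"
  by (auto simp: abs_mult)

lemma pof_act: assumes "g \<in> Gs" shows "pof (act g P) = pof P"
proof -
  obtain p a b c where g: "g = (p,a,b,c)" "p < 6" "a = 1 \<or> a = -1" "b = 1 \<or> b = -1" "c = 1 \<or> c = -1"
    using Gs_cases[OF assms(1)] by blast
  obtain x y z where P: "P = (x,y,z)" by (cases P)
  have "p = 0 \<or> p = 1 \<or> p = 2 \<or> p = 3 \<or> p = 4 \<or> p = 5" using g(2) by auto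
  then show ?thesis using g(3-5) unfolding g(1) P
    by (elim disjE) (simp_all add: unit_abs max.commute max.left_commute max.assoc min.commute min.left_commute min.assoc add.commute add.left_commute add.assoc)
qed

lemma pof_U: assumes "x \<ge> y" "y \<ge> z" "z \<ge> 0" shows "pof (x,y,z) = (x,y,z)"
  using assms by (simp add: max_def min_def)

lemma gof_act: assumes "x > y" "y > z" "z \<ge> 0" "g \<in> Gs" "zs g = -1 \<longrightarrow> z \<noteq> 0"
  shows "gof (act g (x,y,z)) = g"
proof -
  obtain p a b c where g: "g = (p,a,b,c)" "p < 6" "a = 1 \<or> a = -1" "b = 1 \<or> b = -1" "c = 1 \<or> c = -1"
    using Gs_cases[OF assms(4)] by blast
  have s: "sg1 (a * t) = a" if "a = 1 \<or> a = -1" "t > 0" for a t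
    using that by (auto simp: sg1_def)
  have s0: "sg1 (a * 0) = 1" for a by (simp add: sg1_def)
  have "p = 0 \<or> p = 1 \<or> p = 2 \<or> p = 3 \<or> p = 4 \<or> p = 5" using g(2) by auto
  moreover have "z > 0 \<or> z = 0" using assms by auto
  ultimately show ?thesis using g(3-5) assms(1-3,5) unfolding g(1)
    apply (elim disjE)
    apply (simp_all add: unit_abs sg1_def)
    done
qed



lemma K1: assumes "R \<in> sodV" shows "pof R \<in> AA"
proof -
  have "pof R = act (ginv (gof R)) R" using K2[OF assms] ginv_act[OF gof_Gs] by metis
  then have "pof R \<in> sodV" using act_V[OF ginv_Gs[OF gof_Gs] assms] by simp
  moreover have "pof R \<in> sodU" by (cases R) (auto simp: sodU_def max_def min_def)
  ultimately show ?thesis unfolding AA_def by simp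
qed

lemma K3: assumes "(x,y,z) \<in> AA" "g \<in> Gs" "zs g = -1 \<longrightarrow> z \<noteq> 0"
  shows "gof (act g (x,y,z)) = g \<and> pof (act g (x,y,z)) = (x,y,z)"
  using gof_act[OF AA_strict[OF assms(1)] assms(2,3)] pof_act[OF assms(2)] pof_U AA_strict[OF assms(1)]
  by simp

lemma prd_act: assumes "g \<in> Gs" shows "prd (act g P) = 0 \<longleftrightarrow> prd P = 0"
proof -
  obtain p a b c where g: "g = (p,a,b,c)" "p < 6" "a = 1 \<or> a = -1" "b = 1 \<or> b = -1" "c = 1 \<or> c = -1"
    using Gs_cases[OF assms(1)] by blast
  obtain x y z where P: "P = (x,y,z)" by (cases P)
  have "p = 0 \<or> p = 1 \<or> p = 2 \<or> p = 3 \<or> p = 4 \<or> p = 5" using g(2) by auto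
  then show ?thesis using g(3-5) unfolding g(1) P prd_def
    by (elim disjE) auto
qed

lemma prd_AA: assumes "P \<in> AA" shows "prd P = 0 \<longleftrightarrow> snd (snd P) = 0"
proof -
  obtain x y z where P: "P = (x,y,z)" by (cases P)
  show ?thesis using AA_strict[of x y z] assms unfolding P prd_def by auto
qed

lemma dis_AA: assumes "P \<in> AA" "g \<in> Gs" shows "dis_eq (act g P) n \<longleftrightarrow> 2*n = FF P + 2 * ss g"
proof -
  obtain x y z where P: "P = (x,y,z)" by (cases P)
  show ?thesis using dis_char[of x y z g n] assms unfolding P AA_def sodU_def by auto
qed

lemma fin_level: "finite {P \<in> AA. FF P = k}"
proof (rule finite_subset)
  show "{P \<in> AA. FF P = k} \<subseteq> {0..k+1} \<times> {0..k+1} \<times> {0..k+1}"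
  proof
    fix P assume "P \<in> {P \<in> AA. FF P = k}"
    then obtain x y z where P: "P = (x,y,z)" "(x,y,z) \<in> AA" "FF (x,y,z) = k" by (cases P) auto
    have "x \<ge> y" "y \<ge> z" "z \<ge> 0" using P(2) unfolding AA_def sodU_def by auto
    moreover have "2*x + y - 1 \<le> k" using P(3) by (auto simp: ee_def split: if_splits)
    ultimately show "P \<in> {0..k+1} \<times> {0..k+1} \<times> {0..k+1}" using P(1) by auto
  qed
qed simp

lemma piece: assumes "g \<in> Gs"
  shows "{R \<in> sodV. dis_eq R n \<and> \<Phi> R \<and> gof R = g}
    = act g ` {P \<in> AA. 2*n = FF P + 2 * ss g \<and> \<Phi> (act g P) \<and> (zs g = -1 \<longrightarrow> snd (snd P) \<noteq> 0)}"
proof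
  show "{R \<in> sodV. dis_eq R n \<and> \<Phi> R \<and> gof R = g}
    \<subseteq> act g ` {P \<in> AA. 2*n = FF P + 2 * ss g \<and> \<Phi> (act g P) \<and> (zs g = -1 \<longrightarrow> snd (snd P) \<noteq> 0)}"
  proof
    fix R assume R: "R \<in> {R \<in> sodV. dis_eq R n \<and> \<Phi> R \<and> gof R = g}"
    have e: "act g (pof R) = R" "zs g = -1 \<longrightarrow> snd (snd (pof R)) \<noteq> 0" using K2[of R] R by auto
    have a: "pof R \<in> AA" using K1 R by auto
    have "2*n = FF (pof R) + 2 * ss g" using dis_AA[OF a assms, of n] e R by auto
    then show "R \<in> act g ` {P \<in> AA. 2*n = FF P + 2 * ss g \<and> \<Phi> (act g P) \<and> (zs g = -1 \<longrightarrow> snd (snd P) \<noteq> 0)}"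
      using a e R by (intro image_eqI[of _ _ "pof R"]) auto
  qed
next
  show "act g ` {P \<in> AA. 2*n = FF P + 2 * ss g \<and> \<Phi> (act g P) \<and> (zs g = -1 \<longrightarrow> snd (snd P) \<noteq> 0)}
     \<subseteq> {R \<in> sodV. dis_eq R n \<and> \<Phi> R \<and> gof R = g}"
  proof
    fix R assume "R \<in> act g ` {P \<in> AA. 2*n = FF P + 2 * ss g \<and> \<Phi> (act g P) \<and> (zs g = -1 \<longrightarrow> snd (snd P) \<noteq> 0)}"
    then obtain P where P: "R = act g P" "P \<in> AA" "2*n = FF P + 2 * ss g" "\<Phi> (act g P)"
       "zs g = -1 \<longrightarrow> snd (snd P) \<noteq> 0" by auto
    obtain x y z where Pd: "P = (x,y,z)" by (cases P)
    have "gof R = g" using K3[of x y z g] P Pd assms by auto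
    moreover have "R \<in> sodV" using act_V[OF assms] P(1,2) unfolding AA_def by auto
    moreover have "dis_eq R n" using dis_AA[OF P(2) assms] P by auto
    ultimately show "R \<in> {R \<in> sodV. dis_eq R n \<and> \<Phi> R \<and> gof R = g}" using P by auto
  qed
qed

lemma inj_act: "g \<in> Gs \<Longrightarrow> inj_on (act g) X"
  by (metis ginv_act inj_on_inverseI)

lemma count_gen:
  "card {R \<in> sodV. dis_eq R n \<and> \<Phi> R} =
    (\<Sum>g\<in>Gs. card {P \<in> AA. 2*n = FF P + 2 * ss g \<and> \<Phi> (act g P) \<and> (zs g = -1 \<longrightarrow> snd (snd P) \<noteq> 0)})"
proof -
  let ?B = "\<lambda>g. {P \<in> AA. 2*n = FF P + 2 * ss g \<and> \<Phi> (act g P) \<and> (zs g = -1 \<longrightarrow> snd (snd P) \<noteq> 0)}"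
  let ?C = "\<lambda>g. {R \<in> sodV. dis_eq R n \<and> \<Phi> R \<and> gof R = g}"
  have U: "{R \<in> sodV. dis_eq R n \<and> \<Phi> R} = (\<Union>g\<in>Gs. ?C g)" using gof_Gs by blast
  have finB: "finite (?B g)" for g
    by (rule finite_subset[OF _ fin_level[of "2*n - 2 * ss g"]]) auto
  have fin: "finite Gs" unfolding Gs_def by simp
  have finC: "finite (?C g)" if "g \<in> Gs" for g using piece[OF that, of n \<Phi>] finB by simp
  have "card (\<Union>g\<in>Gs. ?C g) = (\<Sum>g\<in>Gs. card (?C g))"
    apply (rule card_UN_disjoint[OF fin])
    using finC apply blast
    apply blast
    done
  also have "\<dots> = (\<Sum>g\<in>Gs. card (?B g))"
    by (rule sum.cong[OF refl]) (simp add: piece card_image inj_act)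
  finally show ?thesis using U by simp
qed



definition TT :: "int \<Rightarrow> pt set" where "TT m = {P \<in> AA. 2*m = FF P}"
definition ZZ :: "int \<Rightarrow> pt set" where "ZZ m = {P \<in> AA. 2*m = FF P \<and> prd P = 0}"

lemma finTT: "finite (TT m)" unfolding TT_def by (rule finite_subset[OF _ fin_level[of "2*m"]]) auto
lemma finZZ: "finite (ZZ m)" unfolding ZZ_def by (rule finite_subset[OF _ fin_level[of "2*m"]]) auto

lemma act_id: "act (0,1,1,1) P = P" by (cases P) simp

lemma g0: "(0,1,1,1) \<in> Gs" unfolding Gs_def gl_def by simp

lemma S2_TT: "S2 m = card (TT m)"
proof -
  have "{P \<in> sodV \<inter> sodU. dis_eq P m} = TT m"
    using dis_AA[OF _ g0, of _ m] unfolding TT_def AA_def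
    by (auto simp: act_id)
  then show ?thesis unfolding S2_def by simp
qed

lemma Sbar1_ZZ: "Sbar1 m = card (ZZ m)"
proof -
  have "{P \<in> sodV \<inter> sodU. dis_eq P m \<and> fst P * fst (snd P) * snd (snd P) = 0} = ZZ m"
    using dis_AA[OF _ g0, of _ m] unfolding ZZ_def AA_def prd_def
    by (auto simp: act_id)
  then show ?thesis unfolding Sbar1_def by simp
qed

lemma ZZ_sub: "ZZ m \<subseteq> TT m" unfolding ZZ_def TT_def by auto

lemma S_formula: "real (S n) = (\<Sum>g\<in>Gs. real (S2 (n - ss g)) - (if zs g = -1 then real (Sbar1 (n - ss g)) else 0))"
proof -
  have "real (S n) = (\<Sum>g\<in>Gs. real (card {P \<in> AA. 2*n = FF P + 2 * ss g \<and> True \<and> (zs g = -1 \<longrightarrow> snd (snd P) \<noteq> 0)}))"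
    using count_gen[of n "\<lambda>_. True"] unfolding S_def by simp
  also have "\<dots> = (\<Sum>g\<in>Gs. real (S2 (n - ss g)) - (if zs g = -1 then real (Sbar1 (n - ss g)) else 0))"
  proof (rule sum.cong[OF refl])
    fix g assume g: "g \<in> Gs"
    show "real (card {P \<in> AA. 2*n = FF P + 2 * ss g \<and> True \<and> (zs g = -1 \<longrightarrow> snd (snd P) \<noteq> 0)})
       = real (S2 (n - ss g)) - (if zs g = -1 then real (Sbar1 (n - ss g)) else 0)"
    proof (cases "zs g = -1")
      case True
      have "{P \<in> AA. 2*n = FF P + 2 * ss g \<and> True \<and> (zs g = -1 \<longrightarrow> snd (snd P) \<noteq> 0)}
          = TT (n - ss g) - ZZ (n - ss g)"
        using True prd_AA unfolding TT_def ZZ_def by (auto simp: algebra_simps)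
      then have "card {P \<in> AA. 2*n = FF P + 2 * ss g \<and> True \<and> (zs g = -1 \<longrightarrow> snd (snd P) \<noteq> 0)}
          = card (TT (n - ss g)) - card (ZZ (n - ss g))"
        using card_Diff_subset[OF finZZ ZZ_sub] by simp
      moreover have "card (ZZ (n - ss g)) \<le> card (TT (n - ss g))" by (rule card_mono[OF finTT ZZ_sub])
      ultimately show ?thesis using True by (simp add: S2_TT Sbar1_ZZ of_nat_diff)
    next
      case False
      have "{P \<in> AA. 2*n = FF P + 2 * ss g \<and> True \<and> (zs g = -1 \<longrightarrow> snd (snd P) \<noteq> 0)} = TT (n - ss g)"
        using False unfolding TT_def by (auto simp: algebra_simps)
      then show ?thesis using False by (simp add: S2_TT)
    qed
  qed
  finally show ?thesis .
qed

lemma Sbar_formula: "real (Sbar n) = (\<Sum>g\<in>Gs. if zs g = -1 then 0 else real (Sbar1 (n - ss g)))"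
proof -
  have "real (Sbar n) = (\<Sum>g\<in>Gs. real (card {P \<in> AA. 2*n = FF P + 2 * ss g \<and> prd (act g P) = 0 \<and> (zs g = -1 \<longrightarrow> snd (snd P) \<noteq> 0)}))"
    using count_gen[of n "\<lambda>R. prd R = 0"] unfolding Sbar_def prd_def by simp
  also have "\<dots> = (\<Sum>g\<in>Gs. if zs g = -1 then 0 else real (Sbar1 (n - ss g)))"
  proof (rule sum.cong[OF refl])
    fix g assume g: "g \<in> Gs"
    have "{P \<in> AA. 2*n = FF P + 2 * ss g \<and> prd (act g P) = 0 \<and> (zs g = -1 \<longrightarrow> snd (snd P) \<noteq> 0)}
        = (if zs g = -1 then {} else ZZ (n - ss g))"
      using prd_act[OF g] prd_AA unfolding ZZ_def by (auto simp: algebra_simps)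
    then show "real (card {P \<in> AA. 2*n = FF P + 2 * ss g \<and> prd (act g P) = 0 \<and> (zs g = -1 \<longrightarrow> snd (snd P) \<noteq> 0)})
       = (if zs g = -1 then 0 else real (Sbar1 (n - ss g)))"
      by (simp add: Sbar1_ZZ)
  qed
  finally show ?thesis .
qed

lemma upt6: "[0..<6] = [0::nat,1,2,3,4,5]" by (simp add: upt_rec)

lemma distinct_gl: "distinct gl" unfolding gl_def upt6 by simp

lemma sum_Gs: "(\<Sum>g\<in>Gs. f g) = sum_list (map f gl)"
  unfolding Gs_def by (rule sum.distinct_set_conv_list[OF distinct_gl])

theorem lemma3:
  shows "\<exists>J :: int set. \<exists>a b c :: int \<Rightarrow> real. finite J \<and>
    (\<forall>n::int. real (Sbar n) = (\<Sum>j\<in>J. a j * real (Sbar1 (n+j))) \<and>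
              real (S n) = (\<Sum>j\<in>J. b j * real (Sbar1 (n+j))) + (\<Sum>j\<in>J. c j * real (S2 (n+j))))"
proof -
  define a :: "int \<Rightarrow> real" where
    "a j = (if j = -3 \<or> j = 3 then 1 else if j = -2 \<or> j = 2 then 3 else if j = -1 \<or> j = 1 then 5 else 6)" for j
  define J :: "int set" where "J = {-3,-2,-1,0,1,2,3}"
  have "real (Sbar n) = (\<Sum>j\<in>J. a j * real (Sbar1 (n+j))) \<and>
        real (S n) = (\<Sum>j\<in>J. (- a j) * real (Sbar1 (n+j))) + (\<Sum>j\<in>J. (2 * a j) * real (S2 (n+j)))" for n
    unfolding S_formula Sbar_formula sum_Gs J_def a_def
    by (simp add: gl_def upt6)
  then show ?thesis
    by (intro exI[of _ J] exI[of _ a] exI[of _ "\<lambda>j. - a j"] exI[of _ "\<lambda>j. 2 * a j"]) (simp add: J_def)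
qed


end
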